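(* Let $f:\mathbb{R}^d\to\mathbb{R}$ be convex and differentiable, let $h:\mathbb{R}^d\to\mathbb{R}\cup\{+\infty\}$ be proper, closed and convex, let $x\in\mathbb{R}^d$, $\lambda>0$, write $G=G^{f}_{\lambda h}(x)$ and $x^+=x-\lambda G$. If $$f(x-2\lambda G)\le f(x-\lambda G)-\lambda\langle G,\nabla f(x)\rangle+\tfrac{\lambda}{2}\|G\|^2,$$ then $$\Big\langle x^+-x,\;\nabla f(x^+)-\nabla f(x)+\tfrac12 G\Big\rangle\le 0 .$$
   Context: $\mathbb{R}^d$ carries the standard inner product $\langle\cdot,\cdot\rangle$ and Euclidean norm $\|\cdot\|$. For $\lambda>0$ the proximal operator is $\mathrm{prox}_{\lambda h}(w)=\arg\min_{u\in\mathbb{R}^d}\big\{\lambda h(u)+\tfrac12\|u-w\|^2\big\}$. The gradient mapping is $G^{f}_{\lambda h}(x)=\frac{1}{\lambda}\Big(x-\mathrm{prox}_{\lambda h}\big(x-\lambda\nabla f(x)\big)\Big)$. *)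

theory Defs
  imports "HOL-Analysis.Analysis" "HOL-Library.Extended_Real"
begin

definition ext_epigraph :: "('a \<Rightarrow> ereal) \<Rightarrow> ('a \<times> real) set" where
  "ext_epigraph h = {(x, t). h x \<le> ereal t}"

definition proper_fun :: "('a \<Rightarrow> ereal) \<Rightarrow> bool" where
  "proper_fun h \<longleftrightarrow> (\<forall>x. h x \<noteq> -\<infinity>) \<and> (\<exists>x. h x \<noteq> \<infinity>)"

definition closed_fun :: "('a::topological_space \<Rightarrow> ereal) \<Rightarrow> bool" where
  "closed_fun h \<longleftrightarrow> closed (ext_epigraph h)"

definition convex_fun :: "('a::real_vector \<Rightarrow> ereal) \<Rightarrow> bool" where
  "convex_fun h \<longleftrightarrow> convex (ext_epigraph h)"

definition prox :: "real \<Rightarrow> ('a::real_normed_vector \<Rightarrow> ereal) \<Rightarrow> 'a \<Rightarrow> 'a" where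
  "prox lam h w = (SOME u. \<forall>v. ereal lam * h u + ereal ((norm (u - w))\<^sup>2 / 2)
                              \<le> ereal lam * h v + ereal ((norm (v - w))\<^sup>2 / 2))"

text \<open>Gradient mapping, with the gradient of f supplied as the function gf.\<close>
definition grad_map :: "('a \<Rightarrow> 'a) \<Rightarrow> real \<Rightarrow> ('a::real_normed_vector \<Rightarrow> ereal) \<Rightarrow> 'a \<Rightarrow> 'a" where
  "grad_map gf lam h x = (1 / lam) *\<^sub>R (x - prox lam h (x - lam *\<^sub>R gf x))"

end

theory Submission
  imports Defs
begin

lemma grad_ineq:
  fixes f :: "'a::euclidean_space \<Rightarrow> real" and gf :: "'a \<Rightarrow> 'a"
  assumes cv: "convex_on UNIV f" and gd: "\<And>y. GDERIV f y :> gf y"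
  shows "f y - f c \<ge> inner (gf c) (y - c)"
proof -
  define g where "g = (\<lambda>t::real. f (c + t *\<^sub>R (y - c)))"
  have gc: "convex_on UNIV g"
    unfolding convex_on_def g_def
  proof (intro conjI ballI allI impI)
    show "convex (UNIV::real set)" by simp
  next
    fix a b u v :: real assume uv: "0 \<le> u" "0 \<le> v" "u + v = 1"
    have "u = 1 - v" using uv by simp
    have e: "c + (u * a + v * b) *\<^sub>R (y - c) = u *\<^sub>R (c + a *\<^sub>R (y - c)) + v *\<^sub>R (c + b *\<^sub>R (y - c))"
      using uv(3) by (simp add: algebra_simps flip: scaleR_add_left)
    show "f (c + (u *\<^sub>R a + v *\<^sub>R b) *\<^sub>R (y - c)) \<le> u * f (c + a *\<^sub>R (y - c)) + v * f (c + b *\<^sub>R (y - c))"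
      using convex_onD[OF cv, of v "c + a *\<^sub>R (y - c)" "c + b *\<^sub>R (y - c)"] uv e
      by (simp add: \<open>u = 1 - v\<close>)
  qed
  have fd: "(f has_derivative (\<lambda>h. inner h (gf c))) (at c)"
    using gd[of c] by (simp add: gderiv_def)
  have ld: "((\<lambda>t::real. c + t *\<^sub>R (y - c)) has_derivative (\<lambda>t. t *\<^sub>R (y - c))) (at 0)"
    by (auto intro!: derivative_eq_intros)
  have "(g has_derivative (\<lambda>t. inner (t *\<^sub>R (y - c)) (gf c))) (at 0)"
    unfolding g_def using has_derivative_compose[OF ld, of f "\<lambda>h. inner h (gf c)"] fd
    by (simp add: o_def)
  hence "(g has_field_derivative inner (y - c) (gf c)) (at 0)"
    unfolding has_field_derivative_def by (simp add: mult.commute[of _ "inner (y - c) (gf c)"])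
  hence "g 1 - g 0 \<ge> inner (y - c) (gf c) * (1 - 0)"
    by (intro convex_on_imp_above_tangent[OF gc]) auto
  thus ?thesis by (simp add: g_def inner_commute)
qed

theorem lemma2p1:
  fixes f :: "'a::euclidean_space \<Rightarrow> real" and gf :: "'a \<Rightarrow> 'a"
    and h :: "'a \<Rightarrow> ereal" and x :: 'a and lam :: real
  assumes f_convex: "convex_on UNIV f"
    and f_grad: "\<And>y. GDERIV f y :> gf y"
    and h_proper: "proper_fun h" and h_closed: "closed_fun h" and h_convex: "convex_fun h"
    and lam_pos: "lam > 0"
    and cond: "f (x - (2 * lam) *\<^sub>R grad_map gf lam h x)
               \<le> f (x - lam *\<^sub>R grad_map gf lam h x) - lam * inner (grad_map gf lam h x) (gf x)
                 + lam / 2 * (norm (grad_map gf lam h x))\<^sup>2"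
  shows "inner ((x - lam *\<^sub>R grad_map gf lam h x) - x)
           (gf (x - lam *\<^sub>R grad_map gf lam h x) - gf x + (1/2) *\<^sub>R grad_map gf lam h x) \<le> 0"
proof -
  define G where "G = grad_map gf lam h x"
  define xp where "xp = x - lam *\<^sub>R G"
  have e: "x - (2 * lam) *\<^sub>R G - xp = - (lam *\<^sub>R G)"
    by (simp add: xp_def algebra_simps flip: scaleR_add_left)
  have t: "f (x - (2 * lam) *\<^sub>R G) - f xp \<ge> inner (gf xp) (- (lam *\<^sub>R G))"
    using grad_ineq[OF f_convex f_grad, where y="x - (2 * lam) *\<^sub>R G" and c=xp] e by simp
  have c: "f (x - (2 * lam) *\<^sub>R G) \<le> f xp - lam * inner G (gf x) + lam / 2 * (norm G)\<^sup>2"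
    using cond by (simp add: G_def xp_def)
  have "inner (xp - x) (gf xp - gf x + (1/2) *\<^sub>R G)
      = - lam * inner G (gf xp) + lam * inner G (gf x) - lam / 2 * (norm G)\<^sup>2"
    by (simp add: xp_def inner_diff_right inner_add_right power2_norm_eq_inner algebra_simps)
  also have "\<dots> \<le> 0" using t c by (simp add: inner_commute)
  finally show ?thesis by (simp add: G_def xp_def)
qed

end
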